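(* Let $n\ge1$ and let $(p_{kl})_{1\le k<l\le n}$ be numbers in $[0,1]$ (write $p_{lk}=p_{kl}$). Let $\mathscr{G}$ be the random undirected graph on $\{1,\dots,n\}$ in which each pair $\{k,l\}$ is an edge independently with probability $p_{kl}$, and let $\vec{\mathscr{G}}$ be the random directed graph on $\{1,\dots,n\}$ in which, for every $k\neq l$, the directed edge $(k,l)$ from $k$ to $l$ is present with probability $p_{kl}$, all these $n(n-1)$ directed edges being independent. Let $K$ be the event that $\mathscr{G}$ is connected and $G$ the event that $\vec{\mathscr{G}}$ is grounded at vertex $1$. Then $P(K)=P(G)$.
   Context: A directed graph on vertex set $\mathscr{V}$ is grounded at $v\in\mathscr{V}$ if for every $w\in\mathscr{V}$ there is a directed path from $w$ to $v$ (the trivial path for $w=v$). *)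

theory Defs
  imports "HOL-Probability.Probability"
begin

text \<open>Vertices are 1..n. The weights p k l are given for k < l; the pair {k,l} / the
  directed edge (k,l) uses p (min k l) (max k l), i.e. p_lk = p_kl.\<close>

definition und_pairs :: "nat \<Rightarrow> nat set set" where
  "und_pairs n = {{k, l} | k l. 1 \<le> k \<and> k < l \<and> l \<le> n}"

definition dir_pairs :: "nat \<Rightarrow> (nat \<times> nat) set" where
  "dir_pairs n = {(k, l). k \<in> {1..n} \<and> l \<in> {1..n} \<and> k \<noteq> l}"

definition rand_ugraph :: "nat \<Rightarrow> (nat \<Rightarrow> nat \<Rightarrow> real) \<Rightarrow> (nat set \<Rightarrow> bool) pmf" where
  "rand_ugraph n p = Pi_pmf (und_pairs n) False (\<lambda>e. bernoulli_pmf (p (Min e) (Max e)))"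

definition rand_dgraph :: "nat \<Rightarrow> (nat \<Rightarrow> nat \<Rightarrow> real) \<Rightarrow> (nat \<times> nat \<Rightarrow> bool) pmf" where
  "rand_dgraph n p = Pi_pmf (dir_pairs n) False (\<lambda>(k, l). bernoulli_pmf (p (min k l) (max k l)))"

definition ug_connected :: "nat \<Rightarrow> (nat set \<Rightarrow> bool) \<Rightarrow> bool" where
  "ug_connected n E \<longleftrightarrow>
     (\<forall>v\<in>{1..n}. \<forall>w\<in>{1..n}. (v, w) \<in> {(a, b). a \<noteq> b \<and> E {a, b}}\<^sup>*)"

definition grounded_at :: "nat \<Rightarrow> (nat \<times> nat \<Rightarrow> bool) \<Rightarrow> nat \<Rightarrow> bool" where
  "grounded_at n D v \<longleftrightarrow> (\<forall>w\<in>{1..n}. (w, v) \<in> {e. D e}\<^sup>*)"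

end

theory Submission
  imports Defs
begin

lemma prob_sum:
  fixes M :: "'a pmf"
  assumes "finite F" "set_pmf M \<subseteq> F"
  shows "measure_pmf.prob M X = (\<Sum>f\<in>F\<inter>X. pmf M f)"
proof -
  have "X = (F \<inter> X) \<union> (X - F)" by blast
  then have "measure_pmf.prob M X = measure_pmf.prob M (F \<inter> X) + measure_pmf.prob M (X - F)"
    by (metis Diff_disjoint Int_Diff_disjoint inf_commute measure_pmf.finite_measure_Union sets_measure_pmf UNIV_I)
  moreover have "measure_pmf.prob M (X - F) = 0"
    using assms(2) by (subst measure_pmf_zero_iff) blast
  ultimately show ?thesis using assms(1) by (simp add: measure_measure_pmf_finite)
qed

definition FS :: "'a set \<Rightarrow> ('a \<Rightarrow> bool) set" where
  "FS A = {f. \<forall>x. x \<notin> A \<longrightarrow> \<not> f x}"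

lemma FS_finite: "finite A \<Longrightarrow> finite (FS A)"
proof -
  assume "finite A"
  have "FS A \<subseteq> (\<lambda>S x. x \<in> S) ` Pow A"
  proof
    fix f assume "f \<in> FS A"
    then have "f = (\<lambda>x. x \<in> {x\<in>A. f x})" "{x\<in>A. f x} \<in> Pow A" by (auto simp: FS_def)
    then show "f \<in> (\<lambda>S x. x \<in> S) ` Pow A" by blast
  qed
  then show ?thesis using \<open>finite A\<close> finite_subset by blast
qed

lemma set_Pi_FS:
  assumes "finite A" shows "set_pmf (Pi_pmf A False B) \<subseteq> FS A"
proof
  fix f assume "f \<in> set_pmf (Pi_pmf A False B)"
  then have "pmf (Pi_pmf A False B) f \<noteq> 0" by (simp add: set_pmf_iff)
  then show "f \<in> FS A" using assms by (auto simp: pmf_Pi FS_def split: if_splits)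
qed

lemma prob_Pi:
  assumes "finite A"
  shows "measure_pmf.prob (Pi_pmf A False B) X = (\<Sum>f\<in>FS A\<inter>X. \<Prod>x\<in>A. pmf (B x) (f x))"
proof -
  have "measure_pmf.prob (Pi_pmf A False B) X = (\<Sum>f\<in>FS A\<inter>X. pmf (Pi_pmf A False B) f)"
    by (rule prob_sum) (auto simp: FS_finite assms set_Pi_FS)
  also have "\<dots> = (\<Sum>f\<in>FS A\<inter>X. \<Prod>x\<in>A. pmf (B x) (f x))"
    by (rule sum.cong) (auto simp: pmf_Pi assms FS_def)
  finally show ?thesis .
qed

lemma und_finite: "finite (und_pairs n)"
proof -
  have "und_pairs n \<subseteq> Pow {1..n}" by (auto simp: und_pairs_def)
  then show ?thesis by (meson finite_Pow_iff finite_atLeastAtMost finite_subset)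
qed

lemma dir_finite: "finite (dir_pairs n)"
proof -
  have "dir_pairs n \<subseteq> {1..n} \<times> {1..n}" by (auto simp: dir_pairs_def)
  then show ?thesis by (meson finite_SigmaI finite_atLeastAtMost finite_subset)
qed

lemma und_mem: "{a, b} \<in> und_pairs n \<longleftrightarrow> a \<noteq> b \<and> a \<in> {1..n} \<and> b \<in> {1..n}"
  by (auto simp: und_pairs_def doubleton_eq_iff; metis linorder_neqE_nat)

lemma und_elem: "e \<in> und_pairs n \<Longrightarrow> e = {Min e, Max e} \<and> Min e < Max e \<and> 1 \<le> Min e \<and> Max e \<le> n"
  by (auto simp: und_pairs_def)

lemma prod_dir:
  "(\<Prod>d\<in>dir_pairs n. h d) = (\<Prod>e\<in>und_pairs n. h (Min e, Max e) * h (Max e, Min e))"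
proof -
  let ?U = "und_pairs n"
  have inj1: "inj_on (\<lambda>e. (Min e, Max e)) ?U"
    by (rule inj_onI) (metis und_elem prod.inject)
  have inj2: "inj_on (\<lambda>e. (Max e, Min e)) ?U"
    by (rule inj_onI) (metis und_elem prod.inject)
  have split: "dir_pairs n = (\<lambda>e. (Min e, Max e)) ` ?U \<union> (\<lambda>e. (Max e, Min e)) ` ?U"
  proof (rule set_eqI, rule iffI)
    fix d assume "d \<in> dir_pairs n"
    then obtain k l where d: "d = (k,l)" "k \<in> {1..n}" "l \<in> {1..n}" "k \<noteq> l" by (auto simp: dir_pairs_def)
    then have e: "{k,l} \<in> ?U" by (simp add: und_mem)
    show "d \<in> (\<lambda>e. (Min e, Max e)) ` ?U \<union> (\<lambda>e. (Max e, Min e)) ` ?U"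
    proof (cases "k < l")
      case True
      then have "d = (Min {k,l}, Max {k,l})" using d by auto
      then show ?thesis using e by blast
    next
      case False
      then have "d = (Max {k,l}, Min {k,l})" using d by auto
      then show ?thesis using e by blast
    qed
  next
    fix d assume "d \<in> (\<lambda>e. (Min e, Max e)) ` ?U \<union> (\<lambda>e. (Max e, Min e)) ` ?U"
    then show "d \<in> dir_pairs n" using und_elem[of _ n] by (fastforce simp: dir_pairs_def)
  qed
  have disj: "(\<lambda>e. (Min e, Max e)) ` ?U \<inter> (\<lambda>e. (Max e, Min e)) ` ?U = {}"
  proof -
    { fix e1 e2 assume "e1 \<in> ?U" "e2 \<in> ?U" "(Min e1, Max e1) = (Max e2, Min e2)"
      then have False using und_elem[of e1 n] und_elem[of e2 n] by auto }
    then show ?thesis by blast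
  qed
  have "(\<Prod>d\<in>dir_pairs n. h d) = (\<Prod>d\<in>(\<lambda>e. (Min e, Max e)) ` ?U. h d) * (\<Prod>d\<in>(\<lambda>e. (Max e, Min e)) ` ?U. h d)"
    unfolding split by (rule prod.union_disjoint) (auto simp: und_finite disj)
  also have "\<dots> = (\<Prod>e\<in>?U. h (Min e, Max e)) * (\<Prod>e\<in>?U. h (Max e, Min e))"
    by (simp add: prod.reindex inj1 inj2)
  also have "\<dots> = (\<Prod>e\<in>?U. h (Min e, Max e) * h (Max e, Min e))"
    by (simp add: prod.distrib)
  finally show ?thesis .
qed


fun dlay :: "(nat \<times> nat \<Rightarrow> bool) \<Rightarrow> nat \<Rightarrow> nat set" where
  "dlay D 0 = {1}"
| "dlay D (Suc k) = dlay D k \<union> {w. \<exists>s\<in>dlay D k. D (w, s)}"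

fun ulay :: "(nat set \<Rightarrow> bool) \<Rightarrow> nat \<Rightarrow> nat set" where
  "ulay E 0 = {1}"
| "ulay E (Suc k) = ulay E k \<union> {w. \<exists>t\<in>ulay E k. w \<noteq> t \<and> E {w, t}}"

definition closer :: "(nat \<Rightarrow> nat set) \<Rightarrow> nat \<Rightarrow> nat \<Rightarrow> bool" where
  "closer L x y \<longleftrightarrow> (\<exists>k. x \<in> L k \<and> y \<notin> L k)"

lemma closer_asym:
  assumes "\<And>k. L k \<subseteq> L (Suc k)" "closer L x y" shows "\<not> closer L y x"
proof
  assume "closer L y x"
  from lift_Suc_mono_le[of L, OF assms(1)]
  have mono: "i \<le> j \<Longrightarrow> L i \<subseteq> L j" for i j by blast
  from assms(2) obtain i where "x \<in> L i" "y \<notin> L i" by (auto simp: closer_def)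
  moreover from \<open>closer L y x\<close> obtain j where "y \<in> L j" "x \<notin> L j" by (auto simp: closer_def)
  ultimately show False using mono[of i j] mono[of j i] by (cases "i \<le> j") auto
qed

lemma dlay_mono: "dlay D k \<subseteq> dlay D (Suc k)" by auto
lemma ulay_mono: "ulay E k \<subseteq> ulay E (Suc k)" by auto

definition sel :: "nat \<Rightarrow> (nat \<Rightarrow> nat set) \<Rightarrow> (nat \<times> nat \<Rightarrow> bool) \<Rightarrow> nat set \<Rightarrow> bool" where
  "sel n L D e = (e \<in> und_pairs n \<and>
     (if closer L (Min e) (Max e) then D (Max e, Min e) else D (Min e, Max e)))"

definition oth :: "nat \<Rightarrow> (nat \<Rightarrow> nat set) \<Rightarrow> (nat \<times> nat \<Rightarrow> bool) \<Rightarrow> nat set \<Rightarrow> bool" where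
  "oth n L D e = (e \<in> und_pairs n \<and>
     (if closer L (Min e) (Max e) then D (Min e, Max e) else D (Max e, Min e)))"

definition rec :: "nat \<Rightarrow> (nat set \<Rightarrow> bool) \<Rightarrow> (nat set \<Rightarrow> bool) \<Rightarrow> nat \<times> nat \<Rightarrow> bool" where
  "rec n E c d = (d \<in> dir_pairs n \<and>
     (let a = min (fst d) (snd d); b = max (fst d) (snd d) in
      if closer (ulay E) a b then (if fst d = b then E {fst d, snd d} else c {fst d, snd d})
      else (if fst d = a then E {fst d, snd d} else c {fst d, snd d})))"

lemma dir_mem: "(a, b) \<in> dir_pairs n \<longleftrightarrow> a \<noteq> b \<and> a \<in> {1..n} \<and> b \<in> {1..n}"
  by (auto simp: dir_pairs_def)

lemma sel_edge:
  assumes "D \<in> FS (dir_pairs n)" "w \<notin> dlay D k" "s \<in> dlay D k"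
  shows "sel n (dlay D) D {w, s} = D (w, s)"
proof -
  have cl: "closer (dlay D) s w" using assms by (auto simp: closer_def)
  then have ncl: "\<not> closer (dlay D) w s" using closer_asym[of "dlay D", OF dlay_mono] by blast
  have ne: "w \<noteq> s" using assms by auto
  show ?thesis
  proof (cases "{w, s} \<in> und_pairs n")
    case True
    show ?thesis
    proof (cases "w < s")
      case True
      then have "Min {w,s} = w" "Max {w,s} = s" by auto
      then show ?thesis using \<open>{w, s} \<in> und_pairs n\<close> ncl by (simp add: sel_def)
    next
      case False
      then have "Min {w,s} = s" "Max {w,s} = w" using ne by auto
      then show ?thesis using \<open>{w, s} \<in> und_pairs n\<close> cl by (simp add: sel_def)
    qed
  next
    case False
    then have "(w, s) \<notin> dir_pairs n" using ne by (simp add: und_mem dir_mem)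
    then show ?thesis using False assms(1) by (simp add: sel_def FS_def)
  qed
qed

lemma lay1: "D \<in> FS (dir_pairs n) \<Longrightarrow> dlay D k = ulay (sel n (dlay D) D) k"
proof (induction k)
  case 0 then show ?case by simp
next
  case (Suc k)
  have "{w. \<exists>s\<in>dlay D k. D (w, s)} - dlay D k =
        {w. \<exists>t\<in>dlay D k. w \<noteq> t \<and> sel n (dlay D) D {w, t}} - dlay D k"
    proof (rule set_eqI, rule iffI)
    fix w assume "w \<in> {w. \<exists>s\<in>dlay D k. D (w, s)} - dlay D k"
    then obtain s where "s \<in> dlay D k" "D (w, s)" "w \<notin> dlay D k" by blast
    moreover then have "w \<noteq> s" by blast
    ultimately show "w \<in> {w. \<exists>t\<in>dlay D k. w \<noteq> t \<and> sel n (dlay D) D {w, t}} - dlay D k"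
      using sel_edge[OF Suc.prems, of w k s] by blast
  next
    fix w assume "w \<in> {w. \<exists>t\<in>dlay D k. w \<noteq> t \<and> sel n (dlay D) D {w, t}} - dlay D k"
    then obtain s where "s \<in> dlay D k" "sel n (dlay D) D {w, s}" "w \<notin> dlay D k" by blast
    then show "w \<in> {w. \<exists>s\<in>dlay D k. D (w, s)} - dlay D k"
      using sel_edge[OF Suc.prems, of w k s] by blast
  qed
  then have "dlay D (Suc k) = dlay D k \<union> {w. \<exists>t\<in>dlay D k. w \<noteq> t \<and> sel n (dlay D) D {w, t}}"
    by auto
  then show ?case using Suc by simp
qed

lemma rec_edge:
  assumes "E \<in> FS (und_pairs n)" "w \<notin> ulay E k" "s \<in> ulay E k"
  shows "rec n E c (w, s) = E {w, s}"
proof -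
  have cl: "closer (ulay E) s w" using assms by (auto simp: closer_def)
  then have ncl: "\<not> closer (ulay E) w s" using closer_asym[of "ulay E", OF ulay_mono] by blast
  have ne: "w \<noteq> s" using assms by auto
  show ?thesis
  proof (cases "(w, s) \<in> dir_pairs n")
    case True
    show ?thesis
    proof (cases "w < s")
      case True
      then show ?thesis using \<open>(w, s) \<in> dir_pairs n\<close> ncl by (simp add: rec_def Let_def)
    next
      case False
      then show ?thesis using \<open>(w, s) \<in> dir_pairs n\<close> cl ne by (simp add: rec_def Let_def)
    qed
  next
    case False
    then have "{w, s} \<notin> und_pairs n" using ne by (simp add: und_mem dir_mem)
    then show ?thesis using False assms(1) by (simp add: rec_def FS_def)
  qed
qed

lemma lay2: "E \<in> FS (und_pairs n) \<Longrightarrow> ulay E k = dlay (rec n E c) k"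
proof (induction k)
  case 0 then show ?case by simp
next
  case (Suc k)
  have "{w. \<exists>s\<in>ulay E k. rec n E c (w, s)} - ulay E k =
        {w. \<exists>t\<in>ulay E k. w \<noteq> t \<and> E {w, t}} - ulay E k"
    proof (rule set_eqI, rule iffI)
    fix w assume "w \<in> {w. \<exists>s\<in>ulay E k. rec n E c (w, s)} - ulay E k"
    then obtain s where "s \<in> ulay E k" "rec n E c (w, s)" "w \<notin> ulay E k" by blast
    moreover then have "w \<noteq> s" by blast
    ultimately show "w \<in> {w. \<exists>t\<in>ulay E k. w \<noteq> t \<and> E {w, t}} - ulay E k"
      using rec_edge[OF Suc.prems, of w k s c] by blast
  next
    fix w assume "w \<in> {w. \<exists>t\<in>ulay E k. w \<noteq> t \<and> E {w, t}} - ulay E k"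
    then obtain s where "s \<in> ulay E k" "E {w, s}" "w \<notin> ulay E k" by blast
    then show "w \<in> {w. \<exists>s\<in>ulay E k. rec n E c (w, s)} - ulay E k"
      using rec_edge[OF Suc.prems, of w k s c] by blast
  qed
  then have "ulay E (Suc k) = ulay E k \<union> {w. \<exists>s\<in>ulay E k. rec n E c (w, s)}"
    by auto
  then show ?case using Suc by simp
qed


lemma und_MinMax:
  assumes "a < b" shows "Min {a, b} = a" "Max {a, b} = (b::nat)"
  using assms by auto

lemma inv1:
  assumes "E \<in> FS (und_pairs n)" "c \<in> FS (und_pairs n)"
  shows "sel n (dlay (rec n E c)) (rec n E c) = E \<and> oth n (dlay (rec n E c)) (rec n E c) = c"
proof -
  have L: "dlay (rec n E c) = ulay E" using lay2[OF assms(1), of _ c] by auto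
  have "sel n (ulay E) (rec n E c) e = E e \<and> oth n (ulay E) (rec n E c) e = c e" for e
  proof (cases "e \<in> und_pairs n")
    case True
    define a where "a = Min e"
    define b where "b = Max e"
    have e: "e = {a, b}" "a < b" "1 \<le> a" "b \<le> n" using und_elem[OF True] a_def b_def by auto
    have d1: "(a, b) \<in> dir_pairs n" "(b, a) \<in> dir_pairs n" using e by (auto simp: dir_mem)
    have ee: "{b, a} = e" using e by auto
    show ?thesis using True d1 e
      by (auto simp: sel_def oth_def rec_def Let_def a_def[symmetric] b_def[symmetric] ee)
  next
    case False
    then show ?thesis using assms by (simp add: sel_def oth_def FS_def)
  qed
  then show ?thesis unfolding L by auto
qed

lemma inv2:
  assumes "D \<in> FS (dir_pairs n)"
  shows "rec n (sel n (dlay D) D) (oth n (dlay D) D) = D"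
proof -
  have L: "ulay (sel n (dlay D) D) = dlay D" using lay1[OF assms] by auto
  have "rec n (sel n (dlay D) D) (oth n (dlay D) D) d = D d" for d
  proof (cases "d \<in> dir_pairs n")
    case True
    obtain x y where d: "d = (x, y)" by force
    have xy: "x \<noteq> y" "{x, y} \<in> und_pairs n" using True d by (auto simp: dir_mem und_mem)
    show ?thesis
    proof (cases "x < y")
      case True
      then have "Min {x,y} = x" "Max {x,y} = y" "min x y = x" "max x y = y" by auto
      then show ?thesis using True xy \<open>d \<in> dir_pairs n\<close> d
        by (auto simp: sel_def oth_def rec_def Let_def L)
    next
      case False
      then have "Min {x,y} = y" "Max {x,y} = x" "min x y = y" "max x y = x" "{y, x} = {x, y}" using xy by auto
      then show ?thesis using False xy \<open>d \<in> dir_pairs n\<close> d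
        by (auto simp: sel_def oth_def rec_def Let_def L)
    qed
  next
    case False
    then show ?thesis using assms by (cases d) (simp add: rec_def FS_def)
  qed
  then show ?thesis by auto
qed

lemma in_FS: "sel n L D \<in> FS (und_pairs n)" "oth n L D \<in> FS (und_pairs n)" "rec n E c \<in> FS (dir_pairs n)"
  by (auto simp: FS_def sel_def oth_def rec_def)

lemma weight:
  assumes "D \<in> FS (dir_pairs n)"
  shows "(\<Prod>d\<in>dir_pairs n. pmf ((\<lambda>(k, l). bernoulli_pmf (p (min k l) (max k l))) d) (D d))
    = (\<Prod>e\<in>und_pairs n. pmf (bernoulli_pmf (p (Min e) (Max e))) (sel n (dlay D) D e))
    * (\<Prod>e\<in>und_pairs n. pmf (bernoulli_pmf (p (Min e) (Max e))) (oth n (dlay D) D e))"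
proof -
  let ?B = "\<lambda>e. bernoulli_pmf (p (Min e) (Max e))"
  have "(\<Prod>d\<in>dir_pairs n. pmf ((\<lambda>(k, l). bernoulli_pmf (p (min k l) (max k l))) d) (D d))
     = (\<Prod>e\<in>und_pairs n. pmf (?B e) (D (Min e, Max e)) * pmf (?B e) (D (Max e, Min e)))"
    unfolding prod_dir
  proof (rule prod.cong)
    fix e assume "e \<in> und_pairs n"
    then have "Min e < Max e" using und_elem by blast
    then show "pmf ((\<lambda>(k, l). bernoulli_pmf (p (min k l) (max k l))) (Min e, Max e)) (D (Min e, Max e)) *
          pmf ((\<lambda>(k, l). bernoulli_pmf (p (min k l) (max k l))) (Max e, Min e)) (D (Max e, Min e)) =
          pmf (?B e) (D (Min e, Max e)) * pmf (?B e) (D (Max e, Min e))"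
      by (simp add: min_def max_def)
  qed simp
  also have "\<dots> = (\<Prod>e\<in>und_pairs n. pmf (?B e) (sel n (dlay D) D e) * pmf (?B e) (oth n (dlay D) D e))"
    by (rule prod.cong) (auto simp: sel_def oth_def)
  also have "\<dots> = (\<Prod>e\<in>und_pairs n. pmf (?B e) (sel n (dlay D) D e)) * (\<Prod>e\<in>und_pairs n. pmf (?B e) (oth n (dlay D) D e))"
    by (simp add: prod.distrib)
  finally show ?thesis .
qed

lemma dreach: "(w, v) \<in> {e. D e}\<^sup>* \<Longrightarrow> v = 1 \<Longrightarrow> \<exists>k. w \<in> dlay D k"
proof (induction rule: converse_rtrancl_induct)
  case base then show ?case by (metis dlay.simps(1) singletonI)
next
  case (step y z)
  then obtain k where "z \<in> dlay D k" by blast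
  then have "y \<in> dlay D (Suc k)" using step by auto
  then show ?case by blast
qed

lemma dreach2: "w \<in> dlay D k \<Longrightarrow> (w, 1) \<in> {e. D e}\<^sup>*"
proof (induction k arbitrary: w)
  case 0 then show ?case by simp
next
  case (Suc k)
  then show ?case by (auto intro: converse_rtrancl_into_rtrancl)
qed

lemma ureach: "(w, v) \<in> {(a, b). a \<noteq> b \<and> E {a, b}}\<^sup>* \<Longrightarrow> v = 1 \<Longrightarrow> \<exists>k. w \<in> ulay E k"
proof (induction rule: converse_rtrancl_induct)
  case base then show ?case by (metis ulay.simps(1) singletonI)
next
  case (step y z)
  then obtain k where "z \<in> ulay E k" by blast
  then have "y \<in> ulay E (Suc k)" using step by auto
  then show ?case by blast
qed

lemma ureach2: "w \<in> ulay E k \<Longrightarrow> (w, 1) \<in> {(a, b). a \<noteq> b \<and> E {a, b}}\<^sup>*"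
proof (induction k arbitrary: w)
  case 0 then show ?case by simp
next
  case (Suc k)
  then show ?case by (auto intro: converse_rtrancl_into_rtrancl)
qed

lemma grounded_iff: "grounded_at n D 1 \<longleftrightarrow> (\<forall>w\<in>{1..n}. \<exists>k. w \<in> dlay D k)"
  unfolding grounded_at_def using dreach[of _ 1 D] dreach2[of _ D] by blast

lemma conn_iff:
  assumes "n \<ge> 1"
  shows "ug_connected n E \<longleftrightarrow> (\<forall>w\<in>{1..n}. \<exists>k. w \<in> ulay E k)"
proof
  assume C: "ug_connected n E"
  show "\<forall>w\<in>{1..n}. \<exists>k. w \<in> ulay E k"
  proof (intro ballI)
    fix w assume "w \<in> {1..n}"
    moreover have "1 \<in> {1..n}" using assms by simp
    ultimately have "(w, 1) \<in> {(a, b). a \<noteq> b \<and> E {a, b}}\<^sup>*"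
      using C unfolding ug_connected_def by blast
    then show "\<exists>k. w \<in> ulay E k" using ureach[of w 1 E] by simp
  qed
next
  let ?R = "{(a, b). a \<noteq> b \<and> E {a, b}}"
  assume H: "\<forall>w\<in>{1..n}. \<exists>k. w \<in> ulay E k"
  have sym: "?R\<inverse> = ?R" by (auto simp: insert_commute)
  show "ug_connected n E" unfolding ug_connected_def
  proof (intro ballI)
    fix v w assume "v \<in> {1..n}" "w \<in> {1..n}"
    then obtain k1 k2 where "v \<in> ulay E k1" "w \<in> ulay E k2" using H by blast
    then have 1: "(v, 1) \<in> ?R\<^sup>*" and 2: "(w, 1) \<in> ?R\<^sup>*" using ureach2 by auto
    from 2 have "(1, w) \<in> (?R\<inverse>)\<^sup>*" by (simp add: rtrancl_converse)
    then have "(1, w) \<in> ?R\<^sup>*" by (simp only: sym)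
    then show "(v, w) \<in> ?R\<^sup>*" using 1 by (rule rtrancl_trans[rotated])
  qed
qed


theorem lemma3p2:
  fixes n :: nat and p :: "nat \<Rightarrow> nat \<Rightarrow> real"
  assumes "n \<ge> 1"
    and "\<And>k l. 1 \<le> k \<Longrightarrow> k < l \<Longrightarrow> l \<le> n \<Longrightarrow> 0 \<le> p k l \<and> p k l \<le> 1"
  shows "measure_pmf.prob (rand_ugraph n p) {E. ug_connected n E}
       = measure_pmf.prob (rand_dgraph n p) {D. grounded_at n D 1}"
proof -
  let ?U = "und_pairs n" and ?Dp = "dir_pairs n"
  let ?BU = "\<lambda>e. bernoulli_pmf (p (Min e) (Max e))"
  let ?BD = "\<lambda>(k, l). bernoulli_pmf (p (min k l) (max k l))"
  define wU where "wU f = (\<Prod>e\<in>?U. pmf (?BU e) (f e))" for f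
  define wD where "wD g = (\<Prod>d\<in>?Dp. pmf (?BD d) (g d))" for g
  define Psi where "Psi g = (sel n (dlay g) g, oth n (dlay g) g)" for g
  define H where "H fc = (if ug_connected n (fst fc) then wU (fst fc) * wU (snd fc) else 0)" for fc
  have finU: "finite (FS ?U)" by (simp add: FS_finite und_finite)
  have finD: "finite (FS ?Dp)" by (simp add: FS_finite dir_finite)
  have PK: "measure_pmf.prob (rand_ugraph n p) {E. ug_connected n E} = (\<Sum>f\<in>FS ?U \<inter> {E. ug_connected n E}. wU f)"
    unfolding rand_ugraph_def wU_def by (rule prob_Pi[OF und_finite])
  have one: "(\<Sum>f\<in>FS ?U. wU f) = 1"
    using prob_Pi[OF und_finite, where B="?BU" and X=UNIV] unfolding wU_def by simp
  have PG: "measure_pmf.prob (rand_dgraph n p) {D. grounded_at n D 1} = (\<Sum>g\<in>FS ?Dp \<inter> {D. grounded_at n D 1}. wD g)"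
    unfolding rand_dgraph_def wD_def by (rule prob_Pi[OF dir_finite])
  have bij: "bij_betw Psi (FS ?Dp) (FS ?U \<times> FS ?U)"
    by (rule bij_betw_byWitness[where f' = "\<lambda>(E, c). rec n E c"])
       (auto simp: Psi_def inv1 inv2 in_FS)
  have "(\<Sum>g\<in>FS ?Dp \<inter> {D. grounded_at n D 1}. wD g) = (\<Sum>g\<in>FS ?Dp. if grounded_at n g 1 then wD g else 0)"
    using finD by (simp add: sum.inter_restrict)
  also have "\<dots> = (\<Sum>g\<in>FS ?Dp. H (Psi g))"
  proof (rule sum.cong)
    fix g assume g: "g \<in> FS ?Dp"
    have "dlay g = ulay (sel n (dlay g) g)" using lay1[OF g] by auto
    then have "grounded_at n g 1 \<longleftrightarrow> ug_connected n (sel n (dlay g) g)"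
      using grounded_iff conn_iff[OF assms(1)] by metis
    then show "(if grounded_at n g 1 then wD g else 0) = H (Psi g)"
      using weight[OF g, of p] by (simp add: H_def Psi_def wD_def wU_def)
  qed simp
  also have "\<dots> = (\<Sum>fc\<in>FS ?U \<times> FS ?U. H fc)"
    by (rule sum.reindex_bij_betw[OF bij])
  also have "\<dots> = (\<Sum>f\<in>FS ?U. \<Sum>c\<in>FS ?U. H (f, c))"
    by (simp add: sum.cartesian_product case_prod_beta)
  also have "\<dots> = (\<Sum>f\<in>FS ?U. if ug_connected n f then wU f * (\<Sum>c\<in>FS ?U. wU c) else 0)"
    unfolding H_def fst_conv snd_conv by (intro sum.cong refl) (simp add: sum_distrib_left)
  also have "\<dots> = (\<Sum>f\<in>FS ?U. if ug_connected n f then wU f else 0)"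
    unfolding one by (intro sum.cong refl) (simp only: mult.right_neutral)
  also have "\<dots> = (\<Sum>f\<in>FS ?U \<inter> {E. ug_connected n E}. wU f)"
    using finU by (simp add: sum.inter_restrict)
  finally show ?thesis using PK PG by simp
qed

end
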